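(* Let $\gamma\in(0,\pi)$, $\Delta>0$, $\Sigma_0,\Theta_0\in\mathbb{R}$, and define $$u_s(x,t)=-\frac{2i\,e^{i\Sigma+\Theta+2i\gamma}\sin\gamma}{\Delta\left(e^{2\Theta+i\gamma}+1\right)},\quad \Sigma=\frac{(t-4\Delta^4x)\cos\gamma}{2\Delta^2}+\Sigma_0,\quad \Theta=\frac{(t+4\Delta^4x)\sin\gamma}{2\Delta^2}+\Theta_0.$$ Set $c_s=-\frac{1}{4\Delta^4}$, $k_s=0$, $\Omega_s=-\frac{\cos\gamma}{\Delta^2}$, $$\varphi_s(y)=\sqrt{\frac{2\sin^2\gamma}{\Delta^2\left(\cos\gamma+\cosh\left(4\Delta^2y\sin\gamma+2\Theta_0\right)\right)}}.$$ Then: (i) $|u_s(x,t)|=\varphi_s(x-c_st)$; (ii) there is a constant $\theta_{0s}\in\mathbb{R}$ such that, with $$\theta_s(y)=-\arctan\!\left(\tan\tfrac{\gamma}{2}\,\tanh\left(2\Delta^2y\sin\gamma+\Theta_0\right)\right)-\cot\gamma\,\left(2\Delta^2y\sin\gamma+\Theta_0\right)+\theta_{0s},$$ one has $u_s(x,t)=\varphi_s(x-c_st)\,e^{i\left(k_sx-\Omega_st+\theta_s(x-c_st)\right)}$ for all $x,t$; (iii) $\varphi=\varphi_s$ satisfies $\varphi_y^2=-\frac{1}{16c^2}V(\varphi)$ with $c=c_s$, $k=k_s$, $\Omega=\Omega_s$ and $A=B=0$, and $\theta_s$ satisfies $\theta_y=\frac{\varphi^4-2ck\varphi^2-2\Omega\varphi^2+4A}{4c\varphi^2}$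 with the same parameters.
   Context: Here $V(\varphi)=\varphi^{-2}\left(\varphi^8+c_3\varphi^6+c_2\varphi^4+c_1\varphi^2+c_0\right)$ with $c_3=4ck-4\Omega$, $c_2=4(c^2k^2+\Omega^2+2A+c(4-2k\Omega))$, $c_1=-32Bc$, $c_0=16A^2$. The function $u_s$ is the one-soliton solution of $u_{tx}=u-i|u|^2u_x$. *)

theory Defs
  imports "HOL-Analysis.Analysis"
begin

definition Vpot :: "real \<Rightarrow> real \<Rightarrow> real \<Rightarrow> real \<Rightarrow> real \<Rightarrow> real \<Rightarrow> real" where
  "Vpot c k \<Omega> A B \<phi> =
     (let c3 = 4*c*k - 4*\<Omega>;
          c2 = 4*(c^2*k^2 + \<Omega>^2 + 2*A + c*(4 - 2*k*\<Omega>));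
          c1 = -32*B*c;
          c0 = 16*A^2
      in \<phi> powi (-2) * (\<phi>^8 + c3*\<phi>^6 + c2*\<phi>^4 + c1*\<phi>^2 + c0))"

definition Sigma_s :: "real \<Rightarrow> real \<Rightarrow> real \<Rightarrow> real \<Rightarrow> real \<Rightarrow> real" where
  "Sigma_s \<gamma> \<Delta> Si0 x t = (t - 4*\<Delta>^4*x) * cos \<gamma> / (2*\<Delta>^2) + Si0"

definition Theta_s :: "real \<Rightarrow> real \<Rightarrow> real \<Rightarrow> real \<Rightarrow> real \<Rightarrow> real" where
  "Theta_s \<gamma> \<Delta> Th0 x t = (t + 4*\<Delta>^4*x) * sin \<gamma> / (2*\<Delta>^2) + Th0"

definition u_s :: "real \<Rightarrow> real \<Rightarrow> real \<Rightarrow> real \<Rightarrow> real \<Rightarrow> real \<Rightarrow> complex" where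
  "u_s \<gamma> \<Delta> Si0 Th0 x t =
     (let \<Sigma> = Sigma_s \<gamma> \<Delta> Si0 x t; \<Theta> = Theta_s \<gamma> \<Delta> Th0 x t in
      - (2 * \<i> * exp (\<i> * of_real \<Sigma> + of_real \<Theta> + 2 * \<i> * of_real \<gamma>) * of_real (sin \<gamma>))
      / (of_real \<Delta> * (exp (of_real (2*\<Theta>) + \<i> * of_real \<gamma>) + 1)))"

definition c_s :: "real \<Rightarrow> real" where "c_s \<Delta> = - 1 / (4*\<Delta>^4)"
definition k_s :: real where "k_s = 0"
definition Omega_s :: "real \<Rightarrow> real \<Rightarrow> real" where "Omega_s \<gamma> \<Delta> = - cos \<gamma> / \<Delta>^2"

definition phi_s :: "real \<Rightarrow> real \<Rightarrow> real \<Rightarrow> real \<Rightarrow> real" where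
  "phi_s \<gamma> \<Delta> Th0 y =
     sqrt (2 * (sin \<gamma>)^2 / (\<Delta>^2 * (cos \<gamma> + cosh (4*\<Delta>^2 * y * sin \<gamma> + 2*Th0))))"

definition theta_s :: "real \<Rightarrow> real \<Rightarrow> real \<Rightarrow> real \<Rightarrow> real \<Rightarrow> real" where
  "theta_s \<gamma> \<Delta> Th0 \<theta>0 y =
     - arctan (tan (\<gamma>/2) * tanh (2*\<Delta>^2 * y * sin \<gamma> + Th0))
     - cot \<gamma> * (2*\<Delta>^2 * y * sin \<gamma> + Th0) + \<theta>0"

end

theory Submission
  imports Defs
begin

lemma polar_pos:
  fixes a b :: real assumes "a > 0"
  shows "Complex a b = of_real (sqrt (a^2+b^2)) * cis (arctan (b/a))"
proof -
  have s: "sqrt (1 + (b/a)^2) = sqrt (a^2+b^2) / a"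
  proof -
    have "1 + (b/a)^2 = (a^2+b^2)/a^2" using assms by (simp add: field_simps power2_eq_square)
    then show ?thesis using assms by (simp add: real_sqrt_divide)
  qed
  have pos: "sqrt (a^2+b^2) > 0" using assms by (simp add: add_pos_nonneg)
  show ?thesis
    by (simp add: complex_eq_iff cos_arctan sin_arctan s) (use assms pos in \<open>simp add: field_simps\<close>)
qed

lemma factor_D:
  fixes T h :: real
  shows "exp (of_real (2*T) + \<i> * of_real (2*h)) + 1 =
     2 * of_real (exp T) * cis h * Complex (cosh T * cos h) (sinh T * sin h)"
proof -
  define E where "E = exp T"
  have E: "E > 0" by (simp add: E_def)
  have ch: "cosh T = (E + 1/E)/2" unfolding E_def cosh_def by (simp add: exp_minus field_simps)
  have sh: "sinh T = (E - 1/E)/2" unfolding E_def sinh_def by (simp add: exp_minus field_simps)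
  have e2: "exp (2*T) = E^2" unfolding E_def by (simp add: power2_eq_square exp_add[symmetric])
  have l: "exp (of_real (2*T) + \<i> * of_real (2*h)) = of_real (E^2) * cis (2*h)"
    by (simp add: exp_eq_polar e2)
  have c2: "cos h ^2 = 1 - sin h ^2" by (simp add: cos_squared_eq)
  show ?thesis unfolding l E_def[symmetric]
  proof (rule complex_eqI)
    show "Re (complex_of_real (E\<^sup>2) * cis (2 * h) + 1) =
    Re (2 * complex_of_real E * cis h * Complex (cosh T * cos h) (sinh T * sin h))"
      using E sin_cos_squared_add[of h] cos_double[of h] sin_double[of h]
      apply (simp add: ch sh field_simps)
      using sin_cos_squared_add[of h] by algebra
    show "Im (complex_of_real (E\<^sup>2) * cis (2 * h) + 1) =
    Im (2 * complex_of_real E * cis h * Complex (cosh T * cos h) (sinh T * sin h))"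
      using E sin_cos_squared_add[of h] cos_double[of h] sin_double[of h]
      apply (simp add: ch sh field_simps)
      by (simp add: power2_eq_square)
  qed
qed


lemma cx:
  fixes E D R C1 C2 C3 S :: complex
  assumes "E \<noteq> 0" "D \<noteq> 0" "R \<noteq> 0" "C2 \<noteq> 0" "C3 \<noteq> 0"
  shows "- (2 * \<i> * (E * C1) * S) / (D * (2 * E * C2 * (R * C3))) = (S / (D * R)) * (- \<i> * C1 / (C2 * C3))"
  using assms by (simp add: field_simps)

lemma u_polar:
  fixes \<gamma> \<Delta> Si0 Th0 x t :: real
  assumes "0 < \<gamma>" "\<gamma> < pi" "\<Delta> > 0"
  defines "\<Theta> \<equiv> Theta_s \<gamma> \<Delta> Th0 x t" and "\<Sigma> \<equiv> Sigma_s \<gamma> \<Delta> Si0 x t"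
  defines "a \<equiv> cosh \<Theta> * cos (\<gamma>/2)" and "b \<equiv> sinh \<Theta> * sin (\<gamma>/2)"
  shows "u_s \<gamma> \<Delta> Si0 Th0 x t = of_real (sin \<gamma> / (\<Delta> * sqrt (a^2+b^2)))
            * cis (\<Sigma> + 2*\<gamma> - \<gamma>/2 - arctan (b/a) - pi/2)"
proof -
  define r where "r = sqrt (a^2+b^2)"
  define \<alpha> where "\<alpha> = arctan (b/a)"
  define h where "h = \<gamma>/2"
  have hpos: "cos h > 0" unfolding h_def using assms(1,2) by (intro cos_gt_zero_pi) auto
  have apos: "a > 0" unfolding a_def h_def[symmetric] using hpos by simp
  have rpos: "r > 0" unfolding r_def using apos by (simp add: add_pos_nonneg)
  have den: "exp (of_real (2*\<Theta>) + \<i> * of_real \<gamma>) + 1 = 2 * of_real (exp \<Theta>) * cis h * (of_real r * cis \<alpha>)"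
  proof -
    have h2: "2*h = \<gamma>" by (simp add: h_def)
    have ah: "cosh \<Theta> * cos h = a" "sinh \<Theta> * sin h = b" by (simp_all add: a_def b_def h_def)
    show ?thesis using factor_D[of \<Theta> h] polar_pos[OF apos, of b]
      unfolding h2 ah r_def[symmetric] \<alpha>_def[symmetric] by simp
  qed
  have num: "exp (\<i> * of_real \<Sigma> + of_real \<Theta> + 2 * \<i> * of_real \<gamma>) = of_real (exp \<Theta>) * cis (\<Sigma> + 2*\<gamma>)"
    by (simp add: exp_eq_polar)
  have mi: "- \<i> = cis (- pi/2)" by (simp add: complex_eq_iff)
  have cisd: "cis (\<Sigma> + 2*\<gamma> - h - \<alpha> - pi/2) = cis (- pi/2) * cis (\<Sigma> + 2*\<gamma>) / (cis h * cis \<alpha>)"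
  proof -
    have e: "\<Sigma> + 2*\<gamma> - h - \<alpha> - pi/2 = (- pi/2 + (\<Sigma> + 2*\<gamma>)) - (h + \<alpha>)" by linarith
    show ?thesis by (simp only: e cis_mult cis_divide)
  qed
  have cisd': "cis (\<Sigma> + 2*\<gamma> - h - \<alpha> - pi/2) = - \<i> * cis (\<Sigma> + 2*\<gamma>) / (cis h * cis \<alpha>)"
    unfolding cisd mi ..
  have "u_s \<gamma> \<Delta> Si0 Th0 x t = of_real (sin \<gamma>) / (of_real \<Delta> * of_real r) * cis (\<Sigma> + 2*\<gamma> - h - \<alpha> - pi/2)"
    unfolding u_s_def Let_def \<Theta>_def[symmetric] \<Sigma>_def[symmetric] den num cisd'
    by (rule cx) (use rpos assms(3) in auto)
  then show ?thesis by (simp add: h_def r_def \<alpha>_def)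
qed


lemma phi_deriv:
  fixes \<gamma> \<Delta> Th0 y :: real
  assumes "0 < \<gamma>" "\<gamma> < pi" "\<Delta> > 0"
  defines "z \<equiv> 4*\<Delta>^2 * y * sin \<gamma> + 2*Th0"
  shows "(phi_s \<gamma> \<Delta> Th0 has_real_derivative
     (- (2 * sin \<gamma> ^ 2 / \<Delta> ^ 2) * (sinh z * (4 * \<Delta> ^ 2 * sin \<gamma>)) / (cos \<gamma> + cosh z) ^ 2)
       / (2 * phi_s \<gamma> \<Delta> Th0 y)) (at y)"
proof -
  have cpos: "\<And>w. cos \<gamma> + cosh w > 0"
  proof -
    fix w :: real
    have "cos \<gamma> > -1" using assms(1,2) cos_monotone_0_pi[of \<gamma> pi] by simp
    moreover have "cosh w \<ge> 1" by (rule cosh_real_ge_1)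
    ultimately show "cos \<gamma> + cosh w > 0" by linarith
  qed
  have spos: "sin \<gamma> > 0" using assms(1,2) by (simp add: sin_gt_zero)
  have gpos: "2 * (sin \<gamma>)^2 / (\<Delta>^2 * (cos \<gamma> + cosh z)) > 0"
    using spos cpos[of z] assms(3) by (intro divide_pos_pos mult_pos_pos) auto
  define g where "g = (\<lambda>y. 2 * (sin \<gamma>)^2 / (\<Delta>^2 * (cos \<gamma> + cosh (4*\<Delta>^2 * y * sin \<gamma> + 2*Th0))))"
  have dg: "(g has_real_derivative (- (2 * sin \<gamma> ^ 2 / \<Delta> ^ 2) * (sinh z * (4 * \<Delta> ^ 2 * sin \<gamma>)) / (cos \<gamma> + cosh z) ^ 2)) (at y)"
    unfolding g_def
    apply (rule derivative_eq_intros refl)+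
    apply (fold z_def)
    subgoal using cpos[of z] assms(3) by simp
    apply (simp)
    using cpos[of z] assms(3) apply (simp add: divide_simps power2_eq_square)
    done
  have pg: "phi_s \<gamma> \<Delta> Th0 = (\<lambda>y. sqrt (g y))" unfolding phi_s_def g_def by auto
  have gz: "g y > 0" using gpos unfolding g_def z_def .
  show ?thesis unfolding pg
    apply (rule DERIV_cong[OF DERIV_chain2[OF DERIV_real_sqrt[OF gz] dg]])
    using gz by (simp add: pg[symmetric] divide_simps)
qed



lemma ode_alg:
  fixes s Ch Sh p \<Delta> \<gamma> :: real
  assumes "p > 0" "\<Delta> > 0" "cos \<gamma> + Ch > 0" "s > 0"
    and "p^2 = 2 * s^2 / (\<Delta>^2 * (cos \<gamma> + Ch))"
    and "s^2 + (cos \<gamma>)^2 = 1" "Ch^2 = Sh^2 + 1"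
  shows "((- (2 * s ^ 2 / \<Delta> ^ 2) * (Sh * (4 * \<Delta> ^ 2 * s)) / (cos \<gamma> + Ch) ^ 2) / (2 * p))^2
     = - 1 / (16 * (c_s \<Delta>)^2) * Vpot (c_s \<Delta>) k_s (Omega_s \<gamma> \<Delta>) 0 0 p"
proof -
  define P where "P = p^2"
  define co where "co = cos \<gamma>"
  define D where "D = co + Ch"
  have Dp: "D > 0" using assms(3) by (simp add: D_def co_def)
  have P: "P = 2 * s^2 / (\<Delta>^2 * D)" using assms(5) by (simp add: P_def D_def co_def)
  have V: "Vpot (c_s \<Delta>) k_s (Omega_s \<gamma> \<Delta>) 0 0 p =
     P^3 - 4*(Omega_s \<gamma> \<Delta>)*P^2 + 4*((Omega_s \<gamma> \<Delta>)^2 + 4*c_s \<Delta>)*P"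
    using assms(1) by (simp add: Vpot_def Let_def k_s_def power_int_minus P_def field_simps)
  have L: "((- (2 * s ^ 2 / \<Delta> ^ 2) * (Sh * (4 * \<Delta> ^ 2 * s)) / (cos \<gamma> + Ch) ^ 2) / (2 * p))^2
     = (8 * s^3 * Sh / D^2)^2 / (4 * P)"
    using assms(1,2) by (simp add: P_def D_def co_def power_divide field_simps)
    have sh: "Sh^2 = (D - co)^2 - 1" using assms(7) by (simp add: D_def)
    have ss: "s^2 = 1 - co^2" using assms(6) by (simp add: co_def)
    show ?thesis unfolding L V P using Dp assms(2,4)
      apply (simp add: c_s_def Omega_s_def co_def[symmetric] field_simps)
      using sh ss by algebra
qed



lemma cnz: "cosh (x::real) \<noteq> 0" using cosh_real_pos[of x] by linarith

lemma theta_alg: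
  fixes pc ps A B \<Delta> :: real
  assumes "pc > 0" "ps > 0" "A > 0" "ps^2 + pc^2 = 1" "A^2 = B^2 + 1" "ct * (2*ps*pc) = pc^2-ps^2"
  shows "- (inverse (1 + (ps/pc * (B/A))\<^sup>2) *
        (0 * (B/A) + (1 - (B/A)\<^sup>2) * ((0 * y + 1 * (2 * \<Delta>\<^sup>2)) * (2*ps*pc) + 0 * (2 * \<Delta>\<^sup>2 * y) + 0) * (ps/pc))) -
     (0 * w + ((0 * y + 1 * (2 * \<Delta>\<^sup>2)) * (2*ps*pc) + 0 * (2 * \<Delta>\<^sup>2 * y) + 0) * ct) + 0 =
     - 2 * \<Delta>\<^sup>2 * (2*ps*pc)\<^sup>2 / ((pc^2-ps^2) + (A^2+B^2)) - 2 * \<Delta>\<^sup>2 * (pc^2-ps^2)"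
proof -
  have d1: "pc^2*A^2 + ps^2*B^2 > 0" proof -
    have "pc^2*A^2 > 0" using assms(1,3) by simp
    moreover have "ps^2*B^2 \<ge> 0" by simp
    ultimately show ?thesis by linarith
  qed
  have d2: "(pc^2-ps^2) + (A^2+B^2) > 0" proof -
    have "pc^2 > 0" using assms(1) by simp
    moreover have "B^2 \<ge> 0" by simp
    ultimately show ?thesis using assms(4,5) by linarith
  qed
  have d1': "(pc*A)^2 + (ps*B)^2 \<noteq> 0" using d1 by (simp add: power_mult_distrib)
  have q1: "1 - (B/A)^2 = 1/A^2"
  proof -
    have a0: "A^2 \<noteq> 0" using assms(3) by simp
    have "1 - (B/A)^2 = (A^2 - B^2)/A^2" using a0 by (simp add: power_divide diff_divide_distrib)
    also have "A^2 - B^2 = 1" using assms(5) by simp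
    finally show ?thesis .
  qed
  have q2: "inverse (1 + (ps/pc*(B/A))^2) = pc^2*A^2/(pc^2*A^2+ps^2*B^2)"
    using assms(1,3) d1 by (simp add: field_simps power_divide power_mult_distrib)
  have q3: "(pc^2-ps^2)+(A^2+B^2) = 2*(pc^2*A^2+ps^2*B^2)"
    using assms(4,5) by algebra
  show ?thesis unfolding q1 q2 q3 using assms(1,2,3) d1
    apply (simp add: field_simps power2_eq_square)
    using assms(4,5,6) by algebra
qed

lemma theta_deriv:
  fixes \<gamma> \<Delta> Th0 \<theta>0 y :: real
  assumes "0 < \<gamma>" "\<gamma> < pi" "\<Delta> > 0"
  defines "w \<equiv> 2*\<Delta>^2 * y * sin \<gamma> + Th0"
  shows "(theta_s \<gamma> \<Delta> Th0 \<theta>0 has_real_derivative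
     (- 2 * \<Delta>^2 * (sin \<gamma>)^2 / (cos \<gamma> + cosh (2*w)) - 2 * \<Delta>^2 * cos \<gamma>)) (at y)"
proof -
  define h where "h = \<gamma>/2"
  have hc: "cos h > 0" unfolding h_def using assms(1,2) by (intro cos_gt_zero_pi) auto
  have hs: "sin h > 0" unfolding h_def using assms(1,2) by (intro sin_gt_zero) auto
  have g: "\<gamma> = 2*h" by (simp add: h_def)
  have e1: "sin \<gamma> = 2 * sin h * cos h" unfolding g by (rule sin_double)
  have e2: "cos \<gamma> = cos h ^2 - sin h ^2" unfolding g by (rule cos_double)
  have e3: "tan (\<gamma>/2) = sin h / cos h" by (simp add: h_def tan_def)
  have e4: "cot \<gamma> = (cos h ^2 - sin h ^2) / (2 * sin h * cos h)" by (simp add: cot_def e1 e2)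
  have e5: "tanh w = sinh w / cosh w" by (simp add: tanh_def)
  have e6: "cosh (2*w) = cosh w ^2 + sinh w ^2" by (rule cosh_double)
  show ?thesis unfolding theta_s_def [abs_def]
    apply (rule derivative_eq_intros refl cnz)+
    apply (fold w_def)
    unfolding e3 e4 e5 e6 unfolding e1 e2
    by (rule theta_alg) (use hc hs sin_cos_squared_add[of h] cosh_square_eq[of w] in auto)
qed



lemma mag:
  fixes \<gamma> \<Delta> \<Theta> :: real
  assumes "0 < \<gamma>" "\<gamma> < pi" "\<Delta> > 0"
  defines "a \<equiv> cosh \<Theta> * cos (\<gamma>/2)" and "b \<equiv> sinh \<Theta> * sin (\<gamma>/2)"
  shows "sin \<gamma> / (\<Delta> * sqrt (a^2+b^2)) = sqrt (2 * (sin \<gamma>)^2 / (\<Delta>^2 * (cos \<gamma> + cosh (2*\<Theta>))))"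
proof -
  define h where "h = \<gamma>/2"
  have g: "\<gamma> = 2*h" by (simp add: h_def)
  have hc: "cos h > 0" unfolding h_def using assms(1,2) by (intro cos_gt_zero_pi) auto
  have apos: "a > 0" unfolding a_def h_def[symmetric] using hc by simp
  have rpos: "sqrt (a^2+b^2) > 0" using apos by (simp add: add_pos_nonneg)
  have sp: "sin \<gamma> > 0" using assms(1,2) by (simp add: sin_gt_zero)
  have ab: "a^2 + b^2 = (cos \<gamma> + cosh (2*\<Theta>))/2"
    unfolding a_def b_def h_def[symmetric] cosh_double
      cos_double[of h, folded g]
    apply (simp only: power_mult_distrib)
    using sin_cos_squared_add[of h] cosh_square_eq[of \<Theta>] by algebra
  have "2 * (sin \<gamma>)^2 / (\<Delta>^2 * (cos \<gamma> + cosh (2*\<Theta>))) = (sin \<gamma> / (\<Delta> * sqrt (a^2+b^2)))^2"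
  proof -
    have rr: "(sqrt (a^2+b^2))^2 = (cos \<gamma> + cosh (2*\<Theta>))/2"
      using real_sqrt_pow2[OF add_nonneg_nonneg[OF zero_le_power2 zero_le_power2], of a b] ab by simp
    show ?thesis by (simp add: power_divide power_mult_distrib rr)
  qed
  then show ?thesis using sp rpos assms(3) by simp
qed

lemma theta_arg:
  fixes \<gamma> \<Delta> Th0 x t :: real
  assumes "\<Delta> > 0"
  shows "Theta_s \<gamma> \<Delta> Th0 x t = 2*\<Delta>^2 * (x - c_s \<Delta> * t) * sin \<gamma> + Th0"
  using assms unfolding Theta_s_def c_s_def apply (simp add: field_simps power2_eq_square)
  by algebra


lemma theta_rhs:
  fixes D \<Delta> s \<gamma> :: real
  assumes "D > 0" "\<Delta> > 0" "s > 0"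
  shows "- 2 * \<Delta>^2 * s^2 / D - 2 * \<Delta>^2 * cos \<gamma> =
    ((2 * s^2 / (\<Delta>^2 * D))^2 - 2 * c_s \<Delta> * k_s * (2 * s^2 / (\<Delta>^2 * D))
      - 2 * Omega_s \<gamma> \<Delta> * (2 * s^2 / (\<Delta>^2 * D)) + 4*0) / (4 * c_s \<Delta> * (2 * s^2 / (\<Delta>^2 * D)))"
  using assms unfolding c_s_def k_s_def Omega_s_def
  apply (simp add: field_simps power2_eq_square)
  by algebra

theorem mainTheorem7:
  fixes \<gamma> \<Delta> Si0 Th0 :: real
  assumes "0 < \<gamma>" "\<gamma> < pi" "\<Delta> > 0"
  defines "c \<equiv> c_s \<Delta>" and "k \<equiv> k_s" and "\<Omega> \<equiv> Omega_s \<gamma> \<Delta>"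
  defines "\<phi> \<equiv> phi_s \<gamma> \<Delta> Th0"
  shows "(\<forall>x t. cmod (u_s \<gamma> \<Delta> Si0 Th0 x t) = \<phi> (x - c*t))
    \<and> (\<exists>\<theta>0s. \<forall>x t. u_s \<gamma> \<Delta> Si0 Th0 x t =
          of_real (\<phi> (x - c*t)) *
          exp (\<i> * of_real (k*x - \<Omega>*t + theta_s \<gamma> \<Delta> Th0 \<theta>0s (x - c*t))))
    \<and> (\<forall>y. \<phi> differentiable (at y) \<and>
          (deriv \<phi> y)^2 = - 1 / (16*c^2) * Vpot c k \<Omega> 0 0 (\<phi> y))
    \<and> (\<forall>\<theta>0 y. theta_s \<gamma> \<Delta> Th0 \<theta>0 differentiable (at y) \<and>
          deriv (theta_s \<gamma> \<Delta> Th0 \<theta>0) y =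
            ((\<phi> y)^4 - 2*c*k*(\<phi> y)^2 - 2*\<Omega>*(\<phi> y)^2 + 4*0) / (4*c*(\<phi> y)^2))"
proof -
  have sp: "sin \<gamma> > 0" using assms(1,2) by (simp add: sin_gt_zero)
  have cpos: "\<And>w. cos \<gamma> + cosh w > 0"
  proof -
    fix w :: real
    have "cos \<gamma> > -1" using assms(1,2) cos_monotone_0_pi[of \<gamma> pi] by simp
    moreover have "cosh w \<ge> 1" by (rule cosh_real_ge_1)
    ultimately show "cos \<gamma> + cosh w > 0" by linarith
  qed
  have phisq: "\<And>y. (\<phi> y)^2 = 2 * (sin \<gamma>)^2 / (\<Delta>^2 * (cos \<gamma> + cosh (4*\<Delta>^2 * y * sin \<gamma> + 2*Th0)))"
    unfolding \<phi>_def phi_s_def using sp cpos assms(3)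
    by (intro real_sqrt_pow2 divide_nonneg_pos mult_pos_pos) auto
  have phipos: "\<And>y. \<phi> y > 0"
    unfolding \<phi>_def phi_s_def using sp cpos assms(3)
    by (intro real_sqrt_gt_zero divide_pos_pos mult_pos_pos) auto
  define \<theta>0s where "\<theta>0s = Si0 - pi/2 + 3*\<gamma>/2 + cot \<gamma> * Th0"
  have II: "\<forall>x t. u_s \<gamma> \<Delta> Si0 Th0 x t =
          of_real (\<phi> (x - c*t)) *
          exp (\<i> * of_real (k*x - \<Omega>*t + theta_s \<gamma> \<Delta> Th0 \<theta>0s (x - c*t)))"
  proof (intro allI)
    fix x t
    define y where "y = x - c*t"
    define \<Theta> where "\<Theta> = Theta_s \<gamma> \<Delta> Th0 x t"
    define a where "a = cosh \<Theta> * cos (\<gamma>/2)"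
    define b where "b = sinh \<Theta> * sin (\<gamma>/2)"
    have Ty: "2*\<Delta>^2 * y * sin \<gamma> + Th0 = \<Theta>"
      unfolding y_def \<Theta>_def c_def using theta_arg[OF assms(3)] by simp
    have u: "u_s \<gamma> \<Delta> Si0 Th0 x t = of_real (sin \<gamma> / (\<Delta> * sqrt (a^2+b^2)))
            * cis (Sigma_s \<gamma> \<Delta> Si0 x t + 2*\<gamma> - \<gamma>/2 - arctan (b/a) - pi/2)"
      unfolding a_def b_def \<Theta>_def by (rule u_polar[OF assms(1-3)])
    have m: "sin \<gamma> / (\<Delta> * sqrt (a^2+b^2)) = \<phi> y"
    proof -
      have "4*\<Delta>^2 * y * sin \<gamma> + 2*Th0 = 2*\<Theta>" using Ty by (simp add: algebra_simps)
      then show ?thesis unfolding \<phi>_def phi_s_def a_def b_def using mag[OF assms(1-3), of \<Theta>] by simp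
    qed
    have hc: "cos (\<gamma>/2) > 0" using assms(1,2) by (intro cos_gt_zero_pi) auto
    have ba: "b/a = tan (\<gamma>/2) * tanh \<Theta>"
      unfolding a_def b_def tan_def tanh_def by (simp add: mult.commute)
    have ph: "Sigma_s \<gamma> \<Delta> Si0 x t + 2*\<gamma> - \<gamma>/2 - arctan (b/a) - pi/2
       = k*x - \<Omega>*t + theta_s \<gamma> \<Delta> Th0 \<theta>0s y"
    proof -
      have "cot \<gamma> * \<Theta> = cos \<gamma> * (t + 4*\<Delta>^4*x) / (2*\<Delta>^2) + cot \<gamma> * Th0"
        unfolding \<Theta>_def Theta_s_def cot_def using sp by (simp add: field_simps)
      then show ?thesis
        unfolding theta_s_def Ty ba Sigma_s_def Omega_s_def \<Omega>_def k_def k_s_def \<theta>0s_def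
        using assms(3) by (simp add: field_simps)
    qed
    show "u_s \<gamma> \<Delta> Si0 Th0 x t =
          of_real (\<phi> (x - c*t)) *
          exp (\<i> * of_real (k*x - \<Omega>*t + theta_s \<gamma> \<Delta> Th0 \<theta>0s (x - c*t)))"
      unfolding u m ph y_def[symmetric] cis_conv_exp ..
  qed
  have I: "\<forall>x t. cmod (u_s \<gamma> \<Delta> Si0 Th0 x t) = \<phi> (x - c*t)"
  proof (intro allI)
    fix x t
    show "cmod (u_s \<gamma> \<Delta> Si0 Th0 x t) = \<phi> (x - c*t)"
      using II phipos[of "x - c*t"] by (simp add: norm_mult)
  qed
  have III: "\<forall>y. \<phi> differentiable (at y) \<and>
          (deriv \<phi> y)^2 = - 1 / (16*c^2) * Vpot c k \<Omega> 0 0 (\<phi> y)"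
  proof
    fix y
    define z where "z = 4*\<Delta>^2 * y * sin \<gamma> + 2*Th0"
    have d: "(\<phi> has_real_derivative
     (- (2 * sin \<gamma> ^ 2 / \<Delta> ^ 2) * (sinh z * (4 * \<Delta> ^ 2 * sin \<gamma>)) / (cos \<gamma> + cosh z) ^ 2)
       / (2 * \<phi> y)) (at y)"
      unfolding \<phi>_def z_def by (rule phi_deriv[OF assms(1-3)])
    have "(deriv \<phi> y)^2 = - 1 / (16*c^2) * Vpot c k \<Omega> 0 0 (\<phi> y)"
      unfolding DERIV_imp_deriv[OF d] c_def k_def \<Omega>_def
      by (rule ode_alg[OF phipos assms(3) cpos sp]) (use phisq[of y] sin_cos_squared_add[of \<gamma>] cosh_square_eq[of z] in \<open>simp_all add: z_def\<close>)
    then show "\<phi> differentiable (at y) \<and>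
          (deriv \<phi> y)^2 = - 1 / (16*c^2) * Vpot c k \<Omega> 0 0 (\<phi> y)"
      using d real_differentiable_def by blast
  qed
  have IV: "\<forall>\<theta>0 y. theta_s \<gamma> \<Delta> Th0 \<theta>0 differentiable (at y) \<and>
          deriv (theta_s \<gamma> \<Delta> Th0 \<theta>0) y =
            ((\<phi> y)^4 - 2*c*k*(\<phi> y)^2 - 2*\<Omega>*(\<phi> y)^2 + 4*0) / (4*c*(\<phi> y)^2)"
  proof (intro allI)
    fix \<theta>0 y
    define w where "w = 2*\<Delta>^2 * y * sin \<gamma> + Th0"
    have d: "(theta_s \<gamma> \<Delta> Th0 \<theta>0 has_real_derivative
     (- 2 * \<Delta>^2 * (sin \<gamma>)^2 / (cos \<gamma> + cosh (2*w)) - 2 * \<Delta>^2 * cos \<gamma>)) (at y)"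
      unfolding w_def by (rule theta_deriv[OF assms(1-3)])
    have z: "4*\<Delta>^2 * y * sin \<gamma> + 2*Th0 = 2*w" by (simp add: w_def algebra_simps)
    have P: "(\<phi> y)^2 = 2 * (sin \<gamma>)^2 / (\<Delta>^2 * (cos \<gamma> + cosh (2*w)))"
      using phisq[of y] unfolding z .
    have p4: "(\<phi> y)^4 = ((\<phi> y)^2)^2" by simp
    have "deriv (theta_s \<gamma> \<Delta> Th0 \<theta>0) y =
            ((\<phi> y)^4 - 2*c*k*(\<phi> y)^2 - 2*\<Omega>*(\<phi> y)^2 + 4*0) / (4*c*(\<phi> y)^2)"
      unfolding DERIV_imp_deriv[OF d] p4 P c_def k_def \<Omega>_def
      by (rule theta_rhs[OF cpos assms(3) sp])
    then show "theta_s \<gamma> \<Delta> Th0 \<theta>0 differentiable (at y) \<and>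
          deriv (theta_s \<gamma> \<Delta> Th0 \<theta>0) y =
            ((\<phi> y)^4 - 2*c*k*(\<phi> y)^2 - 2*\<Omega>*(\<phi> y)^2 + 4*0) / (4*c*(\<phi> y)^2)"
      using d real_differentiable_def by blast
  qed
  show ?thesis using I II III IV by blast
qed

end
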